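(* Let $R$ be a commutative ring with $1\neq 0$, $S\subseteq R$ a multiplicatively closed subset, $M$ an $R$-module and $N\subseteq K$ submodules of $M$. If $N$ is a weak $S$-copure submodule of $M$, then $K/N$ is a weak $S$-copure submodule of the $R$-module $M/N$.
   Context: All rings are commutative with $1\neq 0$ and all modules are unital. A multiplicatively closed subset (m.c.s.) $S$ of $R$ is a subset with $0\notin S$, $1\in S$, and $ss'\in S$ for all $s,s'\in S$. For an ideal $I$ and submodule $L$, $(L:_M I)=\{m\in M: Im\subseteq L\}$, $(0:_M I)=\{m\in M: Im=0\}$, and $(L:_R M)=\{r\in R: rM\subseteq L\}$. A prime submodule of $M$ is a proper submodule $P$ such that $rm\in P$ ($r\in R$, $m\in M$) implies $m\in P$ or $r\in(P:_R M)$. A submodule $L$ of $M$ is $S$-copure if there exists $s\in S$ such that $s(L:_M I)\subseteq L+(0:_M I)$ for every ideal $I$ of $R$. A submodule $N$ of $M$ is weak $S$-copure if every prime submodule of $M$ containing $N$ is $S$-copure. *)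

theory Defs
  imports "HOL-Algebra.Algebra"
begin

definition mcs :: "('a, 'c) ring_scheme \<Rightarrow> 'a set \<Rightarrow> bool" where
  "mcs R S \<longleftrightarrow> S \<subseteq> carrier R \<and> \<zero>\<^bsub>R\<^esub> \<notin> S \<and> \<one>\<^bsub>R\<^esub> \<in> S \<and>
     (\<forall>s\<in>S. \<forall>s'\<in>S. s \<otimes>\<^bsub>R\<^esub> s' \<in> S)"

definition mod_colon :: "('a, 'b, 'm) module_scheme \<Rightarrow> 'b set \<Rightarrow> 'a set \<Rightarrow> 'b set" where
  "mod_colon M L I = {m \<in> carrier M. \<forall>a\<in>I. a \<odot>\<^bsub>M\<^esub> m \<in> L}"

definition mod_ann :: "('a, 'b, 'm) module_scheme \<Rightarrow> 'a set \<Rightarrow> 'b set" where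
  "mod_ann M I = {m \<in> carrier M. \<forall>a\<in>I. a \<odot>\<^bsub>M\<^esub> m = \<zero>\<^bsub>M\<^esub>}"

definition ring_colon :: "('a, 'c) ring_scheme \<Rightarrow> ('a, 'b, 'm) module_scheme \<Rightarrow> 'b set \<Rightarrow> 'a set" where
  "ring_colon R M L = {r \<in> carrier R. \<forall>m\<in>carrier M. r \<odot>\<^bsub>M\<^esub> m \<in> L}"

definition prime_submodule :: "('a, 'c) ring_scheme \<Rightarrow> ('a, 'b, 'm) module_scheme \<Rightarrow> 'b set \<Rightarrow> bool" where
  "prime_submodule R M P \<longleftrightarrow> submodule P R M \<and> P \<noteq> carrier M \<and>
     (\<forall>r\<in>carrier R. \<forall>m\<in>carrier M. r \<odot>\<^bsub>M\<^esub> m \<in> P \<longrightarrow> m \<in> P \<or> r \<in> ring_colon R M P)"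

definition S_copure :: "('a, 'c) ring_scheme \<Rightarrow> ('a, 'b, 'm) module_scheme \<Rightarrow> 'a set \<Rightarrow> 'b set \<Rightarrow> bool" where
  "S_copure R M S L \<longleftrightarrow> submodule L R M \<and>
     (\<exists>s\<in>S. \<forall>I. ideal I R \<longrightarrow>
        (\<lambda>m. s \<odot>\<^bsub>M\<^esub> m) ` mod_colon M L I \<subseteq> L <+>\<^bsub>M\<^esub> mod_ann M I)"

definition weak_S_copure :: "('a, 'c) ring_scheme \<Rightarrow> ('a, 'b, 'm) module_scheme \<Rightarrow> 'a set \<Rightarrow> 'b set \<Rightarrow> bool" where
  "weak_S_copure R M S N \<longleftrightarrow> submodule N R M \<and>
     (\<forall>P. prime_submodule R M P \<and> N \<subseteq> P \<longrightarrow> S_copure R M S P)"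

text \<open>Quotient module M/N: carrier the cosets N + x, coset addition, zero N,
  and r(x + N) = rx + N (written as a union, independent of the representative).
  The ring multiplication/one fields of the record are irrelevant for modules.\<close>
definition quot_module :: "('a, 'b, 'm) module_scheme \<Rightarrow> 'b set \<Rightarrow> ('a, 'b set) module" where
  "quot_module M N =
     \<lparr>carrier = A_RCOSETS M N, monoid.mult = set_add M, one = N,
      ring.zero = N, add = set_add M,
      smult = (\<lambda>r A. \<Union> ((\<lambda>x. a_r_coset M N (smult M r x)) ` A))\<rparr>"

definition quot_sub :: "('a, 'b, 'm) module_scheme \<Rightarrow> 'b set \<Rightarrow> 'b set \<Rightarrow> 'b set set" where
  "quot_sub M K N = a_r_coset M N ` K"

end

theory Submission
  imports Defs
begin

locale qctx = module R M for R :: "('a, 'c) ring_scheme" and M :: "('a, 'b) module" (structure) +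
  fixes N assumes subN: "submodule N R M"
begin

lemma absub: "abelian_subgroup N M"
  apply (rule abelian_subgroupI3)
  using subN unfolding additive_subgroup_def submodule_def apply blast
  by (rule abelian_group_axioms)

lemma Nsub: "N \<subseteq> carrier M"
  using submoduleE(1)[OF subN] .

lemma Nsubgrp: "subgroup N (add_monoid M)"
  using subN submodule_def by blast

lemma zeroN: "\<zero> \<in> N"
  using subgroup.one_closed[OF Nsubgrp] by simp

lemma carrQ: "carrier (quot_module M N) = a_rcosets\<^bsub>M\<^esub> N"
  by (simp add: quot_module_def)

lemma coset_in: "x \<in> carrier M \<Longrightarrow> N +>\<^bsub>M\<^esub> x \<in> carrier (quot_module M N)"
  using a_rcosetsI[OF Nsub] carrQ by simp

lemma coset_ex: "A \<in> carrier (quot_module M N) \<Longrightarrow> \<exists>x\<in>carrier M. A = N +>\<^bsub>M\<^esub> x"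
  unfolding carrQ A_RCOSETS_def' by auto

lemma zeroQ: "\<zero>\<^bsub>quot_module M N\<^esub> = N"
  by (simp add: quot_module_def)

lemma addQ: "x \<in> carrier M \<Longrightarrow> y \<in> carrier M \<Longrightarrow>
   (N +>\<^bsub>M\<^esub> x) \<oplus>\<^bsub>quot_module M N\<^esub> (N +>\<^bsub>M\<^esub> y) = N +>\<^bsub>M\<^esub> (x \<oplus> y)"
  using abelian_subgroup.a_rcos_sum[OF absub] by (simp add: quot_module_def)

lemma coset_eq_N: "x \<in> carrier M \<Longrightarrow> (N +>\<^bsub>M\<^esub> x = N) = (x \<in> N)"
  using abelian_subgroup.a_rcos_const[OF absub] abelian_subgroup.a_rcos_self[OF absub]
  by metis

lemma smultQ: assumes r: "r \<in> carrier R" and x: "x \<in> carrier M"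
  shows "r \<odot>\<^bsub>quot_module M N\<^esub> (N +>\<^bsub>M\<^esub> x) = N +>\<^bsub>M\<^esub> (r \<odot> x)"
proof -
  have "N +>\<^bsub>M\<^esub> (r \<odot> y) = N +>\<^bsub>M\<^esub> (r \<odot> x)" if y: "y \<in> N +>\<^bsub>M\<^esub> x" for y
  proof -
    obtain h where h: "h \<in> N" "y = h \<oplus> x" using y unfolding a_r_coset_def' by auto
    have hc: "h \<in> carrier M" using h Nsub by auto
    have "r \<odot> y = r \<odot> h \<oplus> r \<odot> x" using h hc x r smult_r_distr by simp
    moreover have "r \<odot> h \<in> N" using submoduleE(4)[OF subN] r h by auto
    ultimately have "r \<odot> y \<in> N +>\<^bsub>M\<^esub> (r \<odot> x)"
      using a_rcosI[OF _ Nsub] r x by simp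
    then show ?thesis using a_repr_independence[OF _ _ Nsubgrp] r x by simp
  qed
  then have "(\<Union>y\<in>N +> x. N +> (r \<odot> y)) = (\<Union>y\<in>N +> x. N +> (r \<odot> x))"
    by (intro SUP_cong) simp_all
  moreover have "x \<in> N +> x" using abelian_subgroup.a_rcos_self[OF absub] x .
  ultimately show ?thesis unfolding quot_module_def by auto
qed

lemma invQ: assumes x: "x \<in> carrier M"
  shows "inv\<^bsub>add_monoid (quot_module M N)\<^esub> (N +>\<^bsub>M\<^esub> x) = N +>\<^bsub>M\<^esub> (\<ominus> x)"
proof -
  have eq: "inv\<^bsub>add_monoid (quot_module M N)\<^esub> A = inv\<^bsub>M A_Mod N\<^esub> A" for A
    unfolding m_inv_def by (simp add: quot_module_def A_FactGroup_def')
  interpret G: group "M A_Mod N" using abelian_subgroup.a_factorgroup_is_group[OF absub] .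
  have c1: "N +>\<^bsub>M\<^esub> x \<in> carrier (M A_Mod N)" using coset_in x carrQ by (simp add: A_FactGroup_def')
  have c2: "N +>\<^bsub>M\<^esub> (\<ominus> x) \<in> carrier (M A_Mod N)" using coset_in x carrQ by (simp add: A_FactGroup_def')
  have "(N +>\<^bsub>M\<^esub> (\<ominus> x)) \<otimes>\<^bsub>M A_Mod N\<^esub> (N +>\<^bsub>M\<^esub> x) = \<one>\<^bsub>M A_Mod N\<^esub>"
    using abelian_subgroup.a_rcos_sum[OF absub] x coset_eq_N zeroN
    by (simp add: l_neg add: A_FactGroup_def' abelian_subgroup.a_rcos_const[OF absub] additive_subgroup.zero_closed[OF abelian_subgroup.axioms(1)[OF absub]])
  then show ?thesis using G.inv_equality[OF _ c1 c2] eq by simp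
qed

lemma coset_zero: "N +> \<zero> = N"
  using coset_eq_N zeroN by simp

lemma subQ_facts:
  assumes "submodule P' R (quot_module M N)"
  shows "P' \<subseteq> carrier (quot_module M N)" "N \<in> P'"
    "\<And>A B. A \<in> P' \<Longrightarrow> B \<in> P' \<Longrightarrow> A \<oplus>\<^bsub>quot_module M N\<^esub> B \<in> P'"
    "\<And>A. A \<in> P' \<Longrightarrow> inv\<^bsub>add_monoid (quot_module M N)\<^esub> A \<in> P'"
    "\<And>a A. a \<in> carrier R \<Longrightarrow> A \<in> P' \<Longrightarrow> a \<odot>\<^bsub>quot_module M N\<^esub> A \<in> P'"
proof -
  interpret sg: subgroup P' "add_monoid (quot_module M N)" using assms submodule_def by blast
  show "P' \<subseteq> carrier (quot_module M N)" using sg.subset by simp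
  show "N \<in> P'" using sg.one_closed zeroQ by simp
  show "\<And>A B. A \<in> P' \<Longrightarrow> B \<in> P' \<Longrightarrow> A \<oplus>\<^bsub>quot_module M N\<^esub> B \<in> P'"
    using sg.m_closed by simp
  show "\<And>A. A \<in> P' \<Longrightarrow> inv\<^bsub>add_monoid (quot_module M N)\<^esub> A \<in> P'"
    using sg.m_inv_closed by simp
  show "\<And>a A. a \<in> carrier R \<Longrightarrow> A \<in> P' \<Longrightarrow> a \<odot>\<^bsub>quot_module M N\<^esub> A \<in> P'"
    using submodule.smult_closed[OF assms] by simp
qed

lemma quot_sub_submodule:
  assumes K: "submodule K R M"
  shows "submodule (quot_sub M K N) R (quot_module M N)"
proof -
  have Kc: "K \<subseteq> carrier M" using submoduleE(1)[OF K] .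
  show ?thesis
  proof (intro submodule.intro subgroup.intro submodule_axioms.intro)
    show "quot_sub M K N \<subseteq> carrier (add_monoid (quot_module M N))"
      using Kc coset_in by (auto simp: quot_sub_def)
    show "x \<otimes>\<^bsub>add_monoid (quot_module M N)\<^esub> y \<in> quot_sub M K N"
      if xq: "x \<in> quot_sub M K N" "y \<in> quot_sub M K N" for x y
    proof -
      obtain k1 k2 where k: "k1 \<in> K" "k2 \<in> K" "x = N +> k1" "y = N +> k2"
        using xq unfolding quot_sub_def by blast
      have e: "(N +> k1) \<oplus>\<^bsub>quot_module M N\<^esub> (N +> k2) = N +> (k1 \<oplus> k2)"
        using addQ Kc k by blast
      have "k1 \<oplus> k2 \<in> K" using submoduleE(5)[OF K] k by blast
      then show ?thesis using e k unfolding quot_sub_def by simp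
    qed
    show "\<one>\<^bsub>add_monoid (quot_module M N)\<^esub> \<in> quot_sub M K N"
      using coset_zero zeroQ subgroup.one_closed[of K "add_monoid M"] K
      unfolding quot_sub_def submodule_def by (metis image_eqI monoid.select_convs(2))
    show "inv\<^bsub>add_monoid (quot_module M N)\<^esub> x \<in> quot_sub M K N"
      if xq: "x \<in> quot_sub M K N" for x
    proof -
      obtain k1 where k: "k1 \<in> K" "x = N +> k1"
        using xq by (auto simp: quot_sub_def)
      then show ?thesis using invQ Kc submoduleE(3)[OF K] by (auto simp: quot_sub_def)
    qed
    show "a \<odot>\<^bsub>quot_module M N\<^esub> x \<in> quot_sub M K N"
      if xq: "a \<in> carrier R" "x \<in> quot_sub M K N" for a x
    proof -
      obtain k1 where k: "k1 \<in> K" "x = N +> k1"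
        using xq by (auto simp: quot_sub_def)
      then show ?thesis using smultQ xq(1) Kc submoduleE(4)[OF K] by (auto simp: quot_sub_def)
    qed
  qed
qed

lemma preimage_prime:
  assumes P': "prime_submodule R (quot_module M N) P'"
  shows "prime_submodule R M {m \<in> carrier M. N +> m \<in> P'}" (is "prime_submodule R M ?P")
    "N \<subseteq> {m \<in> carrier M. N +> m \<in> P'}"
proof -
  have sP: "submodule P' R (quot_module M N)" and prp: "P' \<noteq> carrier (quot_module M N)"
    and pr: "\<And>r A. r \<in> carrier R \<Longrightarrow> A \<in> carrier (quot_module M N) \<Longrightarrow>
       r \<odot>\<^bsub>quot_module M N\<^esub> A \<in> P' \<Longrightarrow> A \<in> P' \<or> r \<in> ring_colon R (quot_module M N) P'"
    using P' unfolding prime_submodule_def by blast+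
  note F = subQ_facts[OF sP]
  have sub: "submodule ?P R M"
  proof (rule submoduleI)
    show "?P \<subseteq> carrier M" by auto
    show "\<zero> \<in> ?P" using coset_zero F(2) by simp
    show "\<ominus> a \<in> ?P" if "a \<in> ?P" for a
      using that invQ[of a] F(4)[of "N +> a"] by auto
    show "a \<oplus> b \<in> ?P" if "a \<in> ?P" "b \<in> ?P" for a b
    proof -
      have "(N +> a) \<oplus>\<^bsub>quot_module M N\<^esub> (N +> b) = N +> (a \<oplus> b)"
        using addQ that by blast
      then show ?thesis using F(3)[of "N +> a" "N +> b"] that by auto
    qed
    show "a \<odot> x \<in> ?P" if "a \<in> carrier R" "x \<in> ?P" for a x
      using that smultQ[of a x] F(5)[of a "N +> x"] by auto
  qed
  have "?P \<noteq> carrier M"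
  proof
    assume eq: "?P = carrier M"
    have "carrier (quot_module M N) \<subseteq> P'"
    proof
      fix A assume "A \<in> carrier (quot_module M N)"
      then obtain x where "x \<in> carrier M" "A = N +> x" using coset_ex by blast
      then show "A \<in> P'" using eq by auto
    qed
    then show False using F(1) prp by blast
  qed
  moreover have "m \<in> ?P \<or> r \<in> ring_colon R M ?P"
    if r: "r \<in> carrier R" and m: "m \<in> carrier M" and rm: "r \<odot> m \<in> ?P" for r m
  proof -
    have "r \<odot>\<^bsub>quot_module M N\<^esub> (N +> m) \<in> P'" using rm smultQ r m by simp
    then have "N +> m \<in> P' \<or> r \<in> ring_colon R (quot_module M N) P'"
      using pr r coset_in m by blast
    then show ?thesis
    proof
      assume "N +> m \<in> P'" then show ?thesis using m by simp
    next
      assume rc: "r \<in> ring_colon R (quot_module M N) P'"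
      have "r \<odot> m' \<in> ?P" if "m' \<in> carrier M" for m'
        using rc that coset_in[OF that] smultQ[OF r that] r
        unfolding ring_colon_def by auto
      then show ?thesis using r unfolding ring_colon_def by blast
    qed
  qed
  ultimately show "prime_submodule R M ?P" using sub unfolding prime_submodule_def by blast
  show "N \<subseteq> ?P"
  proof
    fix x assume x: "x \<in> N"
    then have "x \<in> carrier M" using Nsub by auto
    moreover have "N +> x = N" using coset_eq_N calculation x by blast
    ultimately show "x \<in> ?P" using F(2) by auto
  qed
qed

lemma copure_lift:
  assumes sP: "submodule P' R (quot_module M N)" and Sc: "S \<subseteq> carrier R"
    and cp: "S_copure R M S {m \<in> carrier M. N +> m \<in> P'}"
  shows "S_copure R (quot_module M N) S P'"
proof -
  let ?P = "{m \<in> carrier M. N +> m \<in> P'}"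
  let ?Q = "quot_module M N"
  note F = subQ_facts[OF sP]
  obtain s where s: "s \<in> S" and hs: "\<And>I. ideal I R \<Longrightarrow>
      (\<lambda>m. s \<odot> m) ` mod_colon M ?P I \<subseteq> ?P <+>\<^bsub>M\<^esub> mod_ann M I"
    using cp unfolding S_copure_def by blast
  have sc: "s \<in> carrier R" using s Sc by auto
  have "(\<lambda>A. s \<odot>\<^bsub>?Q\<^esub> A) ` mod_colon ?Q P' I \<subseteq> P' <+>\<^bsub>?Q\<^esub> mod_ann ?Q I"
    if I: "ideal I R" for I
  proof
    have Ic: "I \<subseteq> carrier R" using I by (simp add: ideal_def additive_subgroup.a_subset)
    fix B assume "B \<in> (\<lambda>A. s \<odot>\<^bsub>?Q\<^esub> A) ` mod_colon ?Q P' I"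
    then obtain A where A: "A \<in> mod_colon ?Q P' I" and B: "B = s \<odot>\<^bsub>?Q\<^esub> A" by blast
    obtain m where m: "m \<in> carrier M" "A = N +> m" using A coset_ex unfolding mod_colon_def by blast
    have "a \<odot> m \<in> ?P" if "a \<in> I" for a
    proof -
      have ac: "a \<in> carrier R" using Ic that by auto
      then show ?thesis using A m that smultQ[OF ac m(1)] unfolding mod_colon_def by auto
    qed
    then have "m \<in> mod_colon M ?P I" using m unfolding mod_colon_def by auto
    then have "s \<odot> m \<in> ?P <+>\<^bsub>M\<^esub> mod_ann M I" using hs[OF I] by blast
    then obtain p z where p: "p \<in> ?P" and z: "z \<in> mod_ann M I" and smz: "s \<odot> m = p \<oplus> z"
      unfolding set_add_def set_mult_def by auto
    have pc: "p \<in> carrier M" and zc: "z \<in> carrier M" using p z unfolding mod_ann_def by auto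
    have B': "B = (N +> p) \<oplus>\<^bsub>?Q\<^esub> (N +> z)" using B m smultQ[OF sc] smz addQ pc zc by simp
    have "N +> z \<in> mod_ann ?Q I"
      using z zc coset_in smultQ Ic coset_zero zeroQ unfolding mod_ann_def by auto
    then show "B \<in> P' <+>\<^bsub>?Q\<^esub> mod_ann ?Q I"
      using B' p unfolding set_add_def set_mult_def by auto
  qed
  then show ?thesis using sP s unfolding S_copure_def by blast
qed

end

theorem theorem3p5:
  fixes R :: "('a, 'c) ring_scheme" and M :: "('a, 'b) module"
  assumes "cring R" and "module R M" and "mcs R S"
    and "submodule N R M" and "submodule K R M" and "N \<subseteq> K"
    and "weak_S_copure R M S N"
  shows "weak_S_copure R (quot_module M N) S (quot_sub M K N)"
  proof -
  interpret q: qctx R M N using assms(2,4) by (simp add: qctx_def qctx_axioms_def)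
  have Sc: "S \<subseteq> carrier R" using assms(3) unfolding mcs_def by blast
  have wN: "\<And>P. prime_submodule R M P \<Longrightarrow> N \<subseteq> P \<Longrightarrow> S_copure R M S P"
    using assms(7) unfolding weak_S_copure_def by blast
  have "S_copure R (quot_module M N) S P'"
    if P': "prime_submodule R (quot_module M N) P'" for P'
  proof -
    have "S_copure R M S {m \<in> carrier M. N +>\<^bsub>M\<^esub> m \<in> P'}"
      using wN q.preimage_prime[OF P'] by blast
    moreover have "submodule P' R (quot_module M N)" using P' unfolding prime_submodule_def by blast
    ultimately show ?thesis using q.copure_lift Sc by blast
  qed
  then show ?thesis using q.quot_sub_submodule[OF assms(5)] unfolding weak_S_copure_def by blast
qed

end
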